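(* Let $p=p(n)\in[0,1]$, let $\omega=\omega(n)\to\infty$ as $n\to\infty$, and set $z=z(n,\omega):=\omega\sqrt{n}$. Suppose there is a function $\Gamma=\Gamma(z,n,p)$ such that, with high probability, $$\max_{Z\subseteq[n]:\,|Z|\le z}\chi\big(G_{n,p}[Z]\big)\le\Gamma.$$ Then with high probability $|\chi(G_{n,p})-\Lambda|\le\Gamma$, where $\Lambda=\Lambda(n,p)$ is the smallest integer with $\Pr(\chi(G_{n,p})\le\Lambda)\ge1/2$.
   Context: $G_{n,p}$ denotes the binomial random graph on vertex set $[n]$ in which each pair of vertices is an edge independently with probability $p$; $G[Z]$ is the subgraph induced by the vertex set $Z$; $\chi$ denotes the chromatic number. "With high probability" means with probability tending to $1$ as $n\to\infty$. *)

theory Defs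
  imports "HOL-Probability.Probability"
begin

definition all_pairs :: "nat \<Rightarrow> nat set set" where
  "all_pairs n = {{i, j} | i j. 1 \<le> i \<and> i < j \<and> j \<le> n}"

definition gnp :: "nat \<Rightarrow> real \<Rightarrow> nat set set pmf" where
  "gnp n p = map_pmf (\<lambda>f. {e \<in> all_pairs n. f e})
              (Pi_pmf (all_pairs n) False (\<lambda>_. bernoulli_pmf p))"

definition chi :: "nat set set \<Rightarrow> nat set \<Rightarrow> nat" where
  "chi E V = (LEAST k. \<exists>c :: nat \<Rightarrow> nat. (\<forall>v\<in>V. c v < k) \<and>
                 (\<forall>u\<in>V. \<forall>v\<in>V. {u, v} \<in> E \<longrightarrow> c u \<noteq> c v))"

definition Lambda :: "nat \<Rightarrow> real \<Rightarrow> nat" where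
  "Lambda n p = (LEAST k. measure_pmf.prob (gnp n p) {E. chi E {1..n} \<le> k} \<ge> 1/2)"

end

theory Submission
  imports Defs "HOL-Probability.Probability"
begin


lemma exp_fin:
  assumes "finite (set_pmf A)"
  shows "measure_pmf.expectation A (f::_\<Rightarrow>real) = (\<Sum>a\<in>set_pmf A. pmf A a * f a)"
  using assms by (subst integral_measure_pmf[of "set_pmf A"]) auto

lemma exp_pair:
  assumes "finite (set_pmf A)" "finite (set_pmf B)"
  shows "measure_pmf.expectation (pair_pmf A B) (h::_\<Rightarrow>real) =
         measure_pmf.expectation A (\<lambda>a. measure_pmf.expectation B (\<lambda>b. h (a,b)))"
proof -
  have "measure_pmf.expectation (pair_pmf A B) h = (\<Sum>x\<in>set_pmf A \<times> set_pmf B. pmf (pair_pmf A B) x * h x)"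
    using assms by (subst integral_measure_pmf[of "set_pmf A \<times> set_pmf B"]) auto
  also have "\<dots> = (\<Sum>a\<in>set_pmf A. \<Sum>b\<in>set_pmf B. pmf A a * (pmf B b * h (a,b)))"
    by (subst sum.cartesian_product) (auto intro!: sum.cong simp: pmf_pair)
  also have "\<dots> = measure_pmf.expectation A (\<lambda>a. measure_pmf.expectation B (\<lambda>b. h (a,b)))"
    using assms by (simp add: exp_fin sum_distrib_left)
  finally show ?thesis .
qed

lemma var_eq_fin:
  assumes "finite (set_pmf A)"
  shows "measure_pmf.variance A (f::_\<Rightarrow>real) =
    measure_pmf.expectation A (\<lambda>x. (f x)^2) - (measure_pmf.expectation A f)^2"
  using assms by (intro measure_pmf.variance_eq integrable_measure_pmf_finite)

lemma var_pair:
  assumes "finite (set_pmf A)" "finite (set_pmf B)"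
  shows "measure_pmf.variance (pair_pmf A B) (h::_\<Rightarrow>real) =
    measure_pmf.expectation A (\<lambda>a. measure_pmf.variance B (\<lambda>b. h (a,b))) +
    measure_pmf.variance A (\<lambda>a. measure_pmf.expectation B (\<lambda>b. h (a,b)))"
proof -
  have fp: "finite (set_pmf (pair_pmf A B))" using assms by simp
  define g where "g = (\<lambda>a. measure_pmf.expectation B (\<lambda>b. h (a,b)))"
  define s where "s = (\<lambda>a. measure_pmf.expectation B (\<lambda>b. (h (a,b))^2))"
  have "measure_pmf.variance (pair_pmf A B) h = measure_pmf.expectation A s - (measure_pmf.expectation A g)^2"
    apply (subst var_eq_fin[OF fp])
    using assms by (simp add: exp_pair s_def g_def)
  moreover have "measure_pmf.expectation A (\<lambda>a. measure_pmf.variance B (\<lambda>b. h (a,b)))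
     = measure_pmf.expectation A (\<lambda>a. s a - (g a)^2)"
    using assms by (simp add: var_eq_fin s_def g_def)
  moreover have "measure_pmf.expectation A (\<lambda>a. s a - (g a)^2) = measure_pmf.expectation A s - measure_pmf.expectation A (\<lambda>a. (g a)^2)"
    using assms by (intro Bochner_Integration.integral_diff integrable_measure_pmf_finite)
  moreover have "measure_pmf.variance A g = measure_pmf.expectation A (\<lambda>a. (g a)^2) - (measure_pmf.expectation A g)^2"
    using assms by (simp add: var_eq_fin)
  ultimately show ?thesis by (simp add: g_def)
qed

lemma var_bounded_diff:
  assumes "finite (set_pmf A)" "\<And>a a'. a \<in> set_pmf A \<Longrightarrow> a' \<in> set_pmf A \<Longrightarrow> \<bar>g a - g a'\<bar> \<le> (c::real)"
  shows "measure_pmf.variance A g \<le> c^2"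
proof -
  let ?m = "measure_pmf.expectation A g"
  have s1: "(\<Sum>a\<in>set_pmf A. pmf A a) = 1" using assms(1) by (simp add: sum_pmf_eq_1)
  have d: "\<bar>g a - ?m\<bar> \<le> c" if a: "a \<in> set_pmf A" for a
  proof -
    have "g a - ?m = (\<Sum>a'\<in>set_pmf A. pmf A a' * (g a - g a'))"
      using assms(1) s1 by (simp add: exp_fin right_diff_distrib sum_subtractf sum_distrib_right[symmetric])
    also have "\<bar>\<dots>\<bar> \<le> (\<Sum>a'\<in>set_pmf A. \<bar>pmf A a' * (g a - g a')\<bar>)" by (rule sum_abs)
    also have "\<dots> \<le> (\<Sum>a'\<in>set_pmf A. pmf A a' * c)"
      by (intro sum_mono) (auto simp: abs_mult intro!: mult_left_mono assms(2) a)
    also have "\<dots> = c" using s1 by (simp add: sum_distrib_right[symmetric])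
    finally show ?thesis .
  qed
  have "measure_pmf.variance A g = (\<Sum>a\<in>set_pmf A. pmf A a * (g a - ?m)^2)"
    using assms(1) by (simp add: exp_fin)
  also have "\<dots> \<le> (\<Sum>a\<in>set_pmf A. pmf A a * c^2)"
  proof (intro sum_mono mult_left_mono)
    fix a assume a: "a \<in> set_pmf A"
    have "\<bar>g a - ?m\<bar>^2 \<le> c^2" using d[OF a] by (intro power_mono) auto
    thus "(g a - ?m)^2 \<le> c^2" by simp
  qed auto
  also have "\<dots> = c^2" using s1 by (simp add: sum_distrib_right[symmetric])
  finally show ?thesis .
qed

lemma exp_le_const:
  assumes "finite (set_pmf A)" "\<And>a. a \<in> set_pmf A \<Longrightarrow> f a \<le> (c::real)"
  shows "measure_pmf.expectation A f \<le> c"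
proof -
  have s1: "(\<Sum>a\<in>set_pmf A. pmf A a) = 1" using assms(1) by (simp add: sum_pmf_eq_1)
  have "measure_pmf.expectation A f = (\<Sum>a\<in>set_pmf A. pmf A a * f a)" using assms(1) by (simp add: exp_fin)
  also have "\<dots> \<le> (\<Sum>a\<in>set_pmf A. pmf A a * c)" by (intro sum_mono mult_left_mono assms(2)) auto
  also have "\<dots> = c" using s1 by (simp add: sum_distrib_right[symmetric])
  finally show ?thesis .
qed

lemma exp_abs_le:
  assumes "finite (set_pmf A)" "\<And>a. a \<in> set_pmf A \<Longrightarrow> \<bar>f a\<bar> \<le> (c::real)"
  shows "\<bar>measure_pmf.expectation A f\<bar> \<le> c"
proof -
  have "measure_pmf.expectation A f \<le> c" using assms by (intro exp_le_const) (auto simp: abs_le_iff)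
  moreover have "measure_pmf.expectation A (\<lambda>a. - f a) \<le> c" using assms by (intro exp_le_const) (auto simp: abs_le_iff)
  ultimately show ?thesis by (simp add: abs_le_iff)
qed

lemma fin_Pi: "finite I \<Longrightarrow> finite (set_pmf (Pi_pmf I (dflt::bool) q))"
  by (rule finite_subset[OF set_Pi_pmf_subset']) (auto intro!: finite_PiE_dflt)

lemma var_blocks:
  fixes B :: "nat \<Rightarrow> 'a set" and F :: "('a \<Rightarrow> bool) \<Rightarrow> real"
  assumes "\<And>i. i < m \<Longrightarrow> finite (B i)"
    "\<And>i j. i < m \<Longrightarrow> j < m \<Longrightarrow> i \<noteq> j \<Longrightarrow> B i \<inter> B j = {}"
    "\<And>i x y. i < m \<Longrightarrow> (\<forall>a. a \<notin> B i \<longrightarrow> x a = y a) \<Longrightarrow> \<bar>F x - F y\<bar> \<le> 1"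
  shows "measure_pmf.variance (Pi_pmf (\<Union>i<m. B i) False q) F \<le> real m"
  using assms
proof (induction m arbitrary: F)
  case 0
  then show ?case by simp
next
  case (Suc m)
  define J where "J = (\<Union>i<m. B i)"
  have fJ: "finite J" using Suc.prems(1) by (auto simp: J_def)
  have fB: "finite (B m)" using Suc.prems(1) by auto
  have dis: "B m \<inter> J = {}"
  proof -
    have "B m \<inter> B i = {}" if "i < m" for i using Suc.prems(2)[of m i] that by auto
    thus ?thesis by (auto simp: J_def)
  qed
  have U: "(\<Union>i<Suc m. B i) = B m \<union> J" by (auto simp: J_def lessThan_Suc)
  define mrg where "mrg = (\<lambda>(f::'a\<Rightarrow>bool,g::'a\<Rightarrow>bool) x. if x \<in> B m then f x else g x)"
  define PA where "PA = Pi_pmf (B m) False q"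
  define PB where "PB = Pi_pmf J False q"
  have fA: "finite (set_pmf PA)" unfolding PA_def by (rule fin_Pi[OF fB])
  have fPB: "finite (set_pmf PB)" unfolding PB_def by (rule fin_Pi[OF fJ])
  have eq: "Pi_pmf (\<Union>i<Suc m. B i) False q = map_pmf mrg (pair_pmf PA PB)"
    unfolding U PA_def PB_def mrg_def by (rule Pi_pmf_union[OF fB fJ dis])
  have "measure_pmf.variance (Pi_pmf (\<Union>i<Suc m. B i) False q) F =
        measure_pmf.variance (pair_pmf PA PB) (\<lambda>z. F (mrg z))"
    unfolding eq by simp
  also have "\<dots> = measure_pmf.expectation PA (\<lambda>a. measure_pmf.variance PB (\<lambda>b. F (mrg (a,b)))) +
    measure_pmf.variance PA (\<lambda>a. measure_pmf.expectation PB (\<lambda>b. F (mrg (a,b))))"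
    by (rule var_pair[OF fA fPB])
  also have "\<dots> \<le> real m + 1"
  proof (rule add_mono)
    show "measure_pmf.expectation PA (\<lambda>a. measure_pmf.variance PB (\<lambda>b. F (mrg (a,b)))) \<le> real m"
    proof (rule exp_le_const[OF fA])
      fix a
      show "measure_pmf.variance PB (\<lambda>b. F (mrg (a,b))) \<le> real m"
        unfolding PB_def J_def
      proof (rule Suc.IH)
        fix i and x y :: "'a \<Rightarrow> bool" assume i: "i < m" and xy: "\<forall>aa. aa \<notin> B i \<longrightarrow> x aa = y aa"
        have "\<forall>aa. aa \<notin> B i \<longrightarrow> mrg (a,x) aa = mrg (a,y) aa" using xy by (auto simp: mrg_def)
        thus "\<bar>F (mrg (a, x)) - F (mrg (a, y))\<bar> \<le> 1" using Suc.prems(3)[of i] i by auto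
      qed (use Suc.prems in auto)
    qed
  next
    show "measure_pmf.variance PA (\<lambda>a. measure_pmf.expectation PB (\<lambda>b. F (mrg (a,b)))) \<le> 1"
    proof -
      have "measure_pmf.variance PA (\<lambda>a. measure_pmf.expectation PB (\<lambda>b. F (mrg (a,b)))) \<le> 1^2"
      proof (rule var_bounded_diff[OF fA])
        fix a a'
        have "measure_pmf.expectation PB (\<lambda>b. F (mrg (a,b))) - measure_pmf.expectation PB (\<lambda>b. F (mrg (a',b)))
           = measure_pmf.expectation PB (\<lambda>b. F (mrg (a,b)) - F (mrg (a',b)))"
          by (rule Bochner_Integration.integral_diff[symmetric]) (auto intro: integrable_measure_pmf_finite fPB)
        also have "\<bar>\<dots>\<bar> \<le> 1"
        proof (rule exp_abs_le[OF fPB])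
          fix b
          have "\<forall>aa. aa \<notin> B m \<longrightarrow> mrg (a,b) aa = mrg (a',b) aa" by (auto simp: mrg_def)
          thus "\<bar>F (mrg (a, b)) - F (mrg (a', b))\<bar> \<le> 1" using Suc.prems(3)[of m] by auto
        qed
        finally show "\<bar>measure_pmf.expectation PB (\<lambda>b. F (mrg (a,b))) - measure_pmf.expectation PB (\<lambda>b. F (mrg (a',b)))\<bar> \<le> 1" .
      qed
      thus ?thesis by simp
    qed
  qed
  finally show ?case by simp
qed



definition loopless :: "nat set set \<Rightarrow> bool" where
  "loopless E \<longleftrightarrow> (\<forall>u. {u} \<notin> E)"

definition colr :: "nat set set \<Rightarrow> nat set \<Rightarrow> nat \<Rightarrow> (nat \<Rightarrow> nat) \<Rightarrow> bool" where
  "colr E V k c \<longleftrightarrow> (\<forall>v\<in>V. c v < k) \<and> (\<forall>u\<in>V. \<forall>v\<in>V. {u, v} \<in> E \<longrightarrow> c u \<noteq> c v)"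

lemma chi_alt: "chi E V = (LEAST k. \<exists>c. colr E V k c)"
  unfolding chi_def colr_def by simp

lemma chi_le: "colr E V k c \<Longrightarrow> chi E V \<le> k"
  unfolding chi_alt by (rule Least_le) blast

lemma chi_ex:
  assumes "loopless E" "finite V"
  shows "\<exists>c. colr E V (chi E V) c"
proof -
  obtain k where k: "\<forall>v\<in>V. v < k" using assms(2) finite_nat_bounded by (auto simp: subset_eq)
  have "colr E V k id" using k assms(1) unfolding colr_def loopless_def by auto
  hence "\<exists>k c. colr E V k c" by blast
  thus ?thesis unfolding chi_alt by (rule LeastI_ex)
qed

lemma chi_mono:
  assumes "loopless E" "finite W" "V \<subseteq> W"
  shows "chi E V \<le> chi E W"
proof -
  obtain c where "colr E W (chi E W) c" using chi_ex assms by blast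
  hence "colr E V (chi E W) c" using assms(3) unfolding colr_def by blast
  thus ?thesis by (rule chi_le)
qed

lemma chi_cong:
  assumes "\<And>u v. u \<in> V \<Longrightarrow> v \<in> V \<Longrightarrow> ({u,v} \<in> E) = ({u,v} \<in> E')"
  shows "chi E V = chi E' V"
proof -
  have "colr E V k c = colr E' V k c" for k c using assms unfolding colr_def by blast
  hence "(\<lambda>k. \<exists>c. colr E V k c) = (\<lambda>k. \<exists>c. colr E' V k c)" by simp
  thus ?thesis unfolding chi_alt by simp
qed

lemma chi_sub:
  assumes "loopless E" "finite V" "Z \<subseteq> V"
  shows "chi E V \<le> chi E (V - Z) + chi E Z"
proof -
  have fZ: "finite Z" "finite (V - Z)" using assms finite_subset by auto
  obtain c1 where c1: "colr E (V - Z) (chi E (V - Z)) c1" using chi_ex[OF assms(1) fZ(2)] by blast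
  obtain c2 where c2: "colr E Z (chi E Z) c2" using chi_ex[OF assms(1) fZ(1)] by blast
  define c where "c = (\<lambda>v. if v \<in> Z then chi E (V - Z) + c2 v else c1 v)"
  have "colr E V (chi E (V - Z) + chi E Z) c"
    unfolding colr_def
  proof safe
    fix v assume "v \<in> V" thus "c v < chi E (V - Z) + chi E Z"
      using c1 c2 unfolding colr_def c_def by (cases "v \<in> Z") (auto intro: trans_less_add1)
  next
    fix u v assume uv: "u \<in> V" "v \<in> V" "{u,v} \<in> E" "c u = c v"
    show False
    proof (cases "u \<in> Z"; cases "v \<in> Z")
      assume "u \<in> Z" "v \<in> Z" thus False using uv c2 unfolding colr_def c_def by auto
    next
      assume "u \<notin> Z" "v \<notin> Z" thus False using uv c1 unfolding colr_def c_def by auto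
    next
      assume a: "u \<in> Z" "v \<notin> Z"
      hence "c1 v < chi E (V - Z)" using c1 uv unfolding colr_def by auto
      thus False using a uv(4) unfolding c_def by auto
    next
      assume a: "u \<notin> Z" "v \<in> Z"
      hence "c1 u < chi E (V - Z)" using c1 uv unfolding colr_def by auto
      thus False using a uv(4) unfolding c_def by auto
    qed
  qed
  thus ?thesis by (rule chi_le)
qed

lemma chi_empty: "chi E {} = 0"
  using chi_le[of E "{}" 0 id] unfolding colr_def by simp

definition toE :: "nat \<Rightarrow> (nat set \<Rightarrow> bool) \<Rightarrow> nat set set" where
  "toE n f = {e \<in> all_pairs n. f e}"

lemma loopless_toE: "loopless (toE n f)"
  unfolding loopless_def toE_def all_pairs_def by (auto simp: doubleton_eq_iff)

lemma chi_le_n: "chi (toE n f) {1..n} \<le> Suc n"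
  by (rule chi_le[of _ _ _ id]) (use loopless_toE in \<open>auto simp: colr_def loopless_def\<close>)

definition Ymin :: "nat set set \<Rightarrow> nat \<Rightarrow> nat \<Rightarrow> nat" where
  "Ymin E n k = (LEAST s. \<exists>Z\<subseteq>{1..n}. card Z = s \<and> chi E ({1..n} - Z) \<le> k)"

lemma Y_ex: "\<exists>Z\<subseteq>{1..n}. card Z = Ymin E n k \<and> chi E ({1..n} - Z) \<le> k"
proof -
  have "\<exists>s Z. Z\<subseteq>{1..n} \<and> card Z = s \<and> chi E ({1..n} - Z) \<le> k"
    by (rule exI[of _ n], rule exI[of _ "{1..n}"]) (simp add: chi_empty)
  hence "\<exists>s. \<exists>Z\<subseteq>{1..n}. card Z = s \<and> chi E ({1..n} - Z) \<le> k" by blast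
  thus ?thesis unfolding Ymin_def by (rule LeastI_ex)
qed

lemma Y_le: "Z \<subseteq> {1..n} \<Longrightarrow> chi E ({1..n} - Z) \<le> k \<Longrightarrow> Ymin E n k \<le> card Z"
  unfolding Ymin_def by (rule Least_le) blast

lemma Y0: "Ymin E n k = 0 \<longleftrightarrow> chi E {1..n} \<le> k"
proof
  assume "Ymin E n k = 0"
  then obtain Z where "Z \<subseteq> {1..n}" "card Z = 0" "chi E ({1..n} - Z) \<le> k" using Y_ex[of n E k] by auto
  moreover hence "Z = {}" by (meson card_0_eq finite_atLeastAtMost finite_subset)
  ultimately show "chi E {1..n} \<le> k" by simp
next
  assume "chi E {1..n} \<le> k"
  thus "Ymin E n k = 0" using Y_le[of "{}" n E k] by simp
qed

definition blk :: "nat \<Rightarrow> nat set set" where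
  "blk i = {{j, Suc i} | j. 1 \<le> j \<and> j < Suc i}"

lemma blk_finite: "finite (blk i)"
proof -
  have "blk i \<subseteq> (\<lambda>j. {j, Suc i}) ` {..<Suc i}" unfolding blk_def by auto
  thus ?thesis by (rule finite_subset) auto
qed

lemma blk_disj: "i \<noteq> j \<Longrightarrow> blk i \<inter> blk j = {}"
  unfolding blk_def by (auto simp: doubleton_eq_iff)

lemma blk_union: "(\<Union>i<n. blk i) = all_pairs n"
proof
  show "(\<Union>i<n. blk i) \<subseteq> all_pairs n"
  proof
    fix e assume "e \<in> (\<Union>i<n. blk i)"
    then obtain i j where "i < n" "e = {j, Suc i}" "1 \<le> j" "j < Suc i" unfolding blk_def by auto
    moreover have "Suc i \<le> n" using \<open>i < n\<close> by simp
    ultimately show "e \<in> all_pairs n" unfolding all_pairs_def by blast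
  qed
next
  show "all_pairs n \<subseteq> (\<Union>i<n. blk i)"
  proof
    fix e assume "e \<in> all_pairs n"
    then obtain a b where ab: "e = {a,b}" "1 \<le> a" "a < b" "b \<le> n" unfolding all_pairs_def by auto
    hence "e \<in> blk (b - 1)" unfolding blk_def by (intro CollectI exI[of _ a]) auto
    moreover have "b - 1 < n" using ab by auto
    ultimately show "e \<in> (\<Union>i<n. blk i)" by blast
  qed
qed

lemma Y_lip1:
  assumes i: "i < n" and xy: "\<forall>a. a \<notin> blk i \<longrightarrow> x a = y a"
  shows "Ymin (toE n y) n k \<le> Ymin (toE n x) n k + 1"
proof -
  obtain Z where Z: "Z \<subseteq> {1..n}" "card Z = Ymin (toE n x) n k" "chi (toE n x) ({1..n} - Z) \<le> k"
    using Y_ex by blast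
  define Z' where "Z' = insert (Suc i) Z"
  have Z'sub: "Z' \<subseteq> {1..n}" using Z(1) i by (auto simp: Z'_def)
  have "chi (toE n y) ({1..n} - Z') = chi (toE n x) ({1..n} - Z')"
  proof (rule chi_cong)
    fix u v assume "u \<in> {1..n} - Z'" "v \<in> {1..n} - Z'"
    hence "u \<noteq> Suc i" "v \<noteq> Suc i" by (auto simp: Z'_def)
    hence "{u,v} \<notin> blk i" unfolding blk_def by (auto simp: doubleton_eq_iff)
    thus "({u, v} \<in> toE n y) = ({u, v} \<in> toE n x)" using xy unfolding toE_def by auto
  qed
  also have "\<dots> \<le> chi (toE n x) ({1..n} - Z)"
    by (rule chi_mono[OF loopless_toE]) (auto simp: Z'_def)
  finally have "chi (toE n y) ({1..n} - Z') \<le> k" using Z(3) by simp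
  hence "Ymin (toE n y) n k \<le> card Z'" by (rule Y_le[OF Z'sub])
  also have "card Z' \<le> card Z + 1" unfolding Z'_def by (simp add: card_insert_le_m1 card_insert_if)
  finally show ?thesis using Z(2) by simp
qed

lemma Y_lip:
  assumes i: "i < n" and xy: "\<forall>a. a \<notin> blk i \<longrightarrow> x a = y a"
  shows "\<bar>real (Ymin (toE n x) n k) - real (Ymin (toE n y) n k)\<bar> \<le> 1"
proof -
  have "\<forall>a. a \<notin> blk i \<longrightarrow> y a = x a" using xy by auto
  from Y_lip1[OF i xy, of k] Y_lip1[OF i this, of k] show ?thesis by linarith
qed

definition Pn :: "nat \<Rightarrow> real \<Rightarrow> (nat set \<Rightarrow> bool) pmf" where
  "Pn n p = Pi_pmf (all_pairs n) False (\<lambda>_. bernoulli_pmf p)"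

lemma gnp_Pn: "gnp n p = map_pmf (toE n) (Pn n p)"
  unfolding gnp_def Pn_def toE_def by simp

lemma var_Y: "measure_pmf.variance (Pn n p) (\<lambda>f. real (Ymin (toE n f) n k)) \<le> real n"
  unfolding Pn_def blk_union[symmetric]
  by (rule var_blocks) (simp_all add: blk_finite blk_disj Y_lip)

lemma cheb_Y:
  assumes "t > 0"
  shows "measure_pmf.prob (Pn n p) {f. \<bar>real (Ymin (toE n f) n k) -
     measure_pmf.expectation (Pn n p) (\<lambda>f. real (Ymin (toE n f) n k))\<bar> \<ge> t} \<le> real n / t^2"
proof -
  have fin: "finite (set_pmf (Pn n p))" unfolding Pn_def
    by (rule fin_Pi) (simp add: blk_union[symmetric] blk_finite)
  have "measure_pmf.prob (Pn n p) {f. \<bar>real (Ymin (toE n f) n k) -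
     measure_pmf.expectation (Pn n p) (\<lambda>f. real (Ymin (toE n f) n k))\<bar> \<ge> t}
     \<le> measure_pmf.variance (Pn n p) (\<lambda>f. real (Ymin (toE n f) n k)) / t^2"
    using measure_pmf.Chebyshev_inequality[OF _ integrable_measure_pmf_finite[OF fin] assms,
       of "\<lambda>f. real (Ymin (toE n f) n k)"] by simp
  also have "\<dots> \<le> real n / t^2" using var_Y assms by (intro divide_right_mono) auto
  finally show ?thesis .
qed



lemma pr_mono: "A \<subseteq> B \<Longrightarrow> measure_pmf.prob P A \<le> measure_pmf.prob P B"
  by (rule measure_pmf.finite_measure_mono) auto

lemma pr_un: "measure_pmf.prob P (A \<union> B) \<le> measure_pmf.prob P A + measure_pmf.prob P B"
  by (rule measure_subadditive) (auto simp: measure_pmf.emeasure_eq_measure)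

lemma pr_compl: "measure_pmf.prob P (- A) = 1 - measure_pmf.prob P A"
  using measure_pmf.prob_compl[of A P] by (simp add: Compl_eq_Diff_UNIV)

lemma Lambda_alt: "Lambda n p = (LEAST k. measure_pmf.prob (Pn n p) {f. chi (toE n f) {1..n} \<le> k} \<ge> 1/2)"
  unfolding Lambda_def gnp_Pn by (simp add: vimage_def)

lemma Lambda_half: "measure_pmf.prob (Pn n p) {f. chi (toE n f) {1..n} \<le> Lambda n p} \<ge> 1/2"
proof -
  have "{f. chi (toE n f) {1..n} \<le> Suc n} = UNIV" using chi_le_n by auto
  hence "measure_pmf.prob (Pn n p) {f. chi (toE n f) {1..n} \<le> Suc n} \<ge> 1/2" by simp
  thus ?thesis unfolding Lambda_alt by (rule LeastI)
qed

lemma Lambda_less: "measure_pmf.prob (Pn n p) {f. chi (toE n f) {1..n} < Lambda n p} < 1/2"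
proof (cases "Lambda n p = 0")
  case True thus ?thesis by simp
next
  case False
  have "{f. chi (toE n f) {1..n} < Lambda n p} = {f. chi (toE n f) {1..n} \<le> Lambda n p - 1}"
    using False by auto
  moreover have "\<not> measure_pmf.prob (Pn n p) {f. chi (toE n f) {1..n} \<le> Lambda n p - 1} \<ge> 1/2"
  proof
    assume "measure_pmf.prob (Pn n p) {f. chi (toE n f) {1..n} \<le> Lambda n p - 1} \<ge> 1/2"
    hence "Lambda n p \<le> Lambda n p - 1" unfolding Lambda_alt[of n p] by (rule Least_le)
    thus False using False by simp
  qed
  ultimately show ?thesis by simp
qed

lemma good_bound:
  assumes "real (Ymin (toE n f) n k) \<le> w * sqrt (real n)"
    and "\<forall>Z \<subseteq> {1..n}. real (card Z) \<le> w * sqrt (real n) \<longrightarrow> real (chi (toE n f) Z) \<le> g"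
  shows "real (chi (toE n f) {1..n}) \<le> real k + g"
proof -
  obtain Z where Z: "Z \<subseteq> {1..n}" "card Z = Ymin (toE n f) n k" "chi (toE n f) ({1..n} - Z) \<le> k"
    using Y_ex by blast
  have "real (chi (toE n f) Z) \<le> g" using assms Z by auto
  moreover have "chi (toE n f) {1..n} \<le> chi (toE n f) ({1..n} - Z) + chi (toE n f) Z"
    by (rule chi_sub[OF loopless_toE _ Z(1)]) simp
  ultimately show ?thesis using Z(3) by (smt (verit) of_nat_add of_nat_mono)
qed

lemma mu_nonneg: "measure_pmf.expectation P (\<lambda>f. real (Ymin (toE n f) n k)) \<ge> 0"
  by (rule Bochner_Integration.integral_nonneg) simp

lemma mu_bound:
  assumes "measure_pmf.prob (Pn n p) {f. chi (toE n f) {1..n} \<le> k} \<ge> a" "a > 0"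
    and "measure_pmf.expectation (Pn n p) (\<lambda>f. real (Ymin (toE n f) n k)) > 0"
  shows "a * (measure_pmf.expectation (Pn n p) (\<lambda>f. real (Ymin (toE n f) n k)))^2 \<le> real n"
proof -
  define \<mu> where "\<mu> = measure_pmf.expectation (Pn n p) (\<lambda>f. real (Ymin (toE n f) n k))"
  have mu: "\<mu> > 0" using assms(3) by (simp add: \<mu>_def)
  have "{f. chi (toE n f) {1..n} \<le> k} \<subseteq> {f. \<bar>real (Ymin (toE n f) n k) - \<mu>\<bar> \<ge> \<mu>}"
  proof
    fix f assume "f \<in> {f. chi (toE n f) {1..n} \<le> k}"
    hence "Ymin (toE n f) n k = 0" using Y0 by auto
    thus "f \<in> {f. \<bar>real (Ymin (toE n f) n k) - \<mu>\<bar> \<ge> \<mu>}" using mu by auto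
  qed
  hence "a \<le> measure_pmf.prob (Pn n p) {f. \<bar>real (Ymin (toE n f) n k) - \<mu>\<bar> \<ge> \<mu>}"
    using assms(1) pr_mono by (meson order_trans)
  also have "\<dots> \<le> real n / \<mu>^2" unfolding \<mu>_def by (rule cheb_Y) (use mu in \<open>simp add: \<mu>_def\<close>)
  finally have "a \<le> real n / \<mu>^2" .
  thus ?thesis using mu by (simp add: \<mu>_def[symmetric] field_simps)
qed

definition Lset :: "nat \<Rightarrow> real \<Rightarrow> real \<Rightarrow> (nat set \<Rightarrow> bool) set" where
  "Lset n w g = {f. \<forall>Z \<subseteq> {1..n}. real (card Z) \<le> w * sqrt (real n) \<longrightarrow> real (chi (toE n f) Z) \<le> g}"

lemma upper:
  assumes n: "n > 0" and w: "w > sqrt 2"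
  shows "measure_pmf.prob (Pn n p) {f. real (chi (toE n f) {1..n}) > real (Lambda n p) + g}
     \<le> 1/(w - sqrt 2)^2 + (1 - measure_pmf.prob (Pn n p) (Lset n w g))"
proof -
  define k where "k = Lambda n p"
  define Y where "Y = (\<lambda>f. real (Ymin (toE n f) n k))"
  define \<mu> where "\<mu> = measure_pmf.expectation (Pn n p) Y"
  have mu0: "\<mu> \<ge> 0" unfolding \<mu>_def Y_def by (rule mu_nonneg)
  have sn: "sqrt (real n) > 0" using n by simp
  have mu_le: "\<mu> \<le> sqrt 2 * sqrt (real n)"
  proof (cases "\<mu> = 0")
    case True thus ?thesis by simp
  next
    case False
    hence "\<mu> > 0" using mu0 by simp
    hence "1/2 * \<mu>^2 \<le> real n" unfolding \<mu>_def Y_def k_def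
      by (intro mu_bound Lambda_half) auto
    hence "\<mu>^2 \<le> 2 * real n" by simp
    hence "\<mu> \<le> sqrt (2 * real n)" by (rule real_le_rsqrt)
    thus ?thesis by (simp add: real_sqrt_mult)
  qed
  define t where "t = (w - sqrt 2) * sqrt (real n)"
  have t: "t > 0" using w sn by (simp add: t_def)
  have "{f. real (chi (toE n f) {1..n}) > real (Lambda n p) + g} \<subseteq>
        {f. \<bar>Y f - \<mu>\<bar> \<ge> t} \<union> - Lset n w g"
  proof
    fix f assume bad: "f \<in> {f. real (chi (toE n f) {1..n}) > real (Lambda n p) + g}"
    show "f \<in> {f. \<bar>Y f - \<mu>\<bar> \<ge> t} \<union> - Lset n w g"
    proof (cases "f \<in> Lset n w g")
      case True
      have "\<not> Y f \<le> w * sqrt (real n)"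
      proof
        assume "Y f \<le> w * sqrt (real n)"
        moreover have "\<forall>Z \<subseteq> {1..n}. real (card Z) \<le> w * sqrt (real n) \<longrightarrow> real (chi (toE n f) Z) \<le> g"
          using True unfolding Lset_def by blast
        ultimately have "real (chi (toE n f) {1..n}) \<le> real k + g" unfolding Y_def by (rule good_bound)
        thus False using bad by (simp add: k_def)
      qed
      have "t = w * sqrt (real n) - sqrt 2 * sqrt (real n)" by (simp add: t_def left_diff_distrib)
      hence "Y f - \<mu> \<ge> t" using mu_le \<open>\<not> Y f \<le> w * sqrt (real n)\<close> by linarith
      thus ?thesis by auto
    qed auto
  qed
  hence "measure_pmf.prob (Pn n p) {f. real (chi (toE n f) {1..n}) > real (Lambda n p) + g}
     \<le> measure_pmf.prob (Pn n p) ({f. \<bar>Y f - \<mu>\<bar> \<ge> t} \<union> - Lset n w g)" by (rule pr_mono)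
  also have "\<dots> \<le> measure_pmf.prob (Pn n p) {f. \<bar>Y f - \<mu>\<bar> \<ge> t} + measure_pmf.prob (Pn n p) (- Lset n w g)"
    by (rule pr_un)
  also have "measure_pmf.prob (Pn n p) {f. \<bar>Y f - \<mu>\<bar> \<ge> t} \<le> real n / t^2"
    unfolding \<mu>_def Y_def by (rule cheb_Y[OF t])
  also have "real n / t^2 = 1/(w - sqrt 2)^2"
    using sn unfolding t_def by (simp add: power_mult_distrib)
  finally show ?thesis by (simp add: pr_compl)
qed



lemma lower:
  assumes n: "n > 0" and w: "w > 0"
    and small: "4/w^2 + (1 - measure_pmf.prob (Pn n p) (Lset n w g)) < 1/2"
  shows "measure_pmf.prob (Pn n p) {f. real (chi (toE n f) {1..n}) < real (Lambda n p) - g} \<le> 4/w^2"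
proof (cases "\<lceil>real (Lambda n p) - g\<rceil> \<le> 0")
  case True
  hence "{f. real (chi (toE n f) {1..n}) < real (Lambda n p) - g} = {}"
  proof -
    have "real (Lambda n p) - g \<le> of_int \<lceil>real (Lambda n p) - g\<rceil>" by (rule le_of_int_ceiling)
    also have "\<dots> \<le> 0" using True by simp
    finally have "real (Lambda n p) - g \<le> 0" .
    hence "\<not> real (chi (toE n f) {1..n}) < real (Lambda n p) - g" for f
      using of_nat_0_le_iff[of "chi (toE n f) {1..n}"] by linarith
    thus ?thesis by blast
  qed
  thus ?thesis by simp
next
  case False
  define c where "c = \<lceil>real (Lambda n p) - g\<rceil>"
  define k where "k = nat (c - 1)"
  have kr: "real k < real (Lambda n p) - g"
  proof -
    have c0: "c - 1 \<ge> 0" using False by (simp add: c_def)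
    have "real k = of_int (c - 1)" unfolding k_def using c0 by simp
    also have "\<dots> = of_int c - 1" by simp
    also have "\<dots> < real (Lambda n p) - g" unfolding c_def by (rule conjunct1[OF ceiling_correct])
    finally show ?thesis .
  qed
  have sub: "{f. real (chi (toE n f) {1..n}) < real (Lambda n p) - g} \<subseteq> {f. chi (toE n f) {1..n} \<le> k}"
  proof
    fix f assume "f \<in> {f. real (chi (toE n f) {1..n}) < real (Lambda n p) - g}"
    hence "real (chi (toE n f) {1..n}) < real (Lambda n p) - g" by simp
    hence "of_int (int (chi (toE n f) {1..n})) < real (Lambda n p) - g" by simp
    hence "int (chi (toE n f) {1..n}) < c" unfolding c_def less_ceiling_iff by simp
    thus "f \<in> {f. chi (toE n f) {1..n} \<le> k}" by (simp add: k_def)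
  qed
  define Y where "Y = (\<lambda>f. real (Ymin (toE n f) n k))"
  define \<mu> where "\<mu> = measure_pmf.expectation (Pn n p) Y"
  have sn: "sqrt (real n) > 0" using n by simp
  define s where "s = w * sqrt (real n) / 2"
  have s: "s > 0" using sn w by (simp add: s_def)
  have s2: "s^2 = w^2 * real n / 4" unfolding s_def by (simp add: power_mult_distrib power_divide)
  have ns: "real n / s^2 = 4 / w^2" unfolding s2 using n w by (simp add: field_simps)
  have mu_big: "\<mu> > s"
  proof (rule ccontr)
    assume "\<not> \<mu> > s"
    hence ms: "\<mu> \<le> s" by simp
    define G where "G = {f. Y f \<le> w * sqrt (real n)} \<inter> Lset n w g"
    have "G \<subseteq> {f. chi (toE n f) {1..n} < Lambda n p}"
    proof
      fix f assume "f \<in> G"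
      hence "real (chi (toE n f) {1..n}) \<le> real k + g"
        unfolding G_def Y_def Lset_def by (intro good_bound) auto
      thus "f \<in> {f. chi (toE n f) {1..n} < Lambda n p}" using kr by simp
    qed
    hence "measure_pmf.prob (Pn n p) G \<le> measure_pmf.prob (Pn n p) {f. chi (toE n f) {1..n} < Lambda n p}"
      by (rule pr_mono)
    hence pG: "measure_pmf.prob (Pn n p) G < 1/2" using Lambda_less[of n p] by linarith
    have "- G \<subseteq> {f. \<bar>Y f - \<mu>\<bar> \<ge> s} \<union> - Lset n w g"
    proof
      fix f assume "f \<in> - G"
      hence "\<not> Y f \<le> w * sqrt (real n) \<or> f \<notin> Lset n w g" unfolding G_def by blast
      moreover have "w * sqrt (real n) = 2 * s" by (simp add: s_def)
      ultimately have "s \<le> Y f - \<mu> \<or> f \<notin> Lset n w g" using ms by linarith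
      thus "f \<in> {f. \<bar>Y f - \<mu>\<bar> \<ge> s} \<union> - Lset n w g" by auto
    qed
    hence "measure_pmf.prob (Pn n p) (- G) \<le> measure_pmf.prob (Pn n p) ({f. \<bar>Y f - \<mu>\<bar> \<ge> s} \<union> - Lset n w g)"
      by (rule pr_mono)
    also have "\<dots> \<le> measure_pmf.prob (Pn n p) {f. \<bar>Y f - \<mu>\<bar> \<ge> s} + measure_pmf.prob (Pn n p) (- Lset n w g)"
      by (rule pr_un)
    also have "measure_pmf.prob (Pn n p) {f. \<bar>Y f - \<mu>\<bar> \<ge> s} \<le> real n / s^2"
      unfolding \<mu>_def Y_def by (rule cheb_Y[OF s])
    finally have "measure_pmf.prob (Pn n p) (- G) \<le> 4/w^2 + (1 - measure_pmf.prob (Pn n p) (Lset n w g))"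
      by (simp add: ns pr_compl)
    hence "1 - measure_pmf.prob (Pn n p) G < 1/2" using small by (simp add: pr_compl)
    thus False using pG by simp
  qed
  define a where "a = measure_pmf.prob (Pn n p) {f. chi (toE n f) {1..n} \<le> k}"
  have "a \<le> 4/w^2"
  proof (cases "a = 0")
    case True thus ?thesis by simp
  next
    case False
    hence a: "a > 0" unfolding a_def by (simp add: zero_less_measure_iff)
    have m0: "measure_pmf.expectation (Pn n p) (\<lambda>f. real (Ymin (toE n f) n k)) > 0"
      using mu_big s unfolding \<mu>_def Y_def by linarith
    have "a * (measure_pmf.expectation (Pn n p) (\<lambda>f. real (Ymin (toE n f) n k)))^2 \<le> real n"
      by (rule mu_bound[OF _ a m0]) (simp add: a_def)
    hence "a * \<mu>^2 \<le> real n" by (simp add: \<mu>_def Y_def)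
    moreover have "a * s^2 \<le> a * \<mu>^2" using mu_big s a by (intro mult_left_mono power_mono) auto
    ultimately have "a * s^2 \<le> real n" by linarith
    hence "a \<le> real n / s^2" using s by (simp add: field_simps)
    thus ?thesis using ns by simp
  qed
  moreover have "measure_pmf.prob (Pn n p) {f. real (chi (toE n f) {1..n}) < real (Lambda n p) - g} \<le> a"
    unfolding a_def by (rule pr_mono[OF sub])
  ultimately show ?thesis by linarith
qed



theorem lemma5:
  fixes p :: "nat \<Rightarrow> real" and \<omega> :: "nat \<Rightarrow> real" and \<Gamma> :: "nat \<Rightarrow> real"
  assumes p_range: "\<And>n. 0 \<le> p n \<and> p n \<le> 1"
    and omega_inf: "filterlim \<omega> at_top sequentially"
    and whp_local: "(\<lambda>n. measure_pmf.prob (gnp n (p n))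
          {E. \<forall>Z \<subseteq> {1..n}. real (card Z) \<le> \<omega> n * sqrt (real n) \<longrightarrow>
                real (chi E Z) \<le> \<Gamma> n}) \<longlonglongrightarrow> 1"
  shows "(\<lambda>n. measure_pmf.prob (gnp n (p n))
          {E. \<bar>real (chi E {1..n}) - real (Lambda n (p n))\<bar> \<le> \<Gamma> n}) \<longlonglongrightarrow> 1"
proof -
  define pr where "pr = (\<lambda>n. measure_pmf.prob (Pn n (p n)))"
  define \<delta> where "\<delta> = (\<lambda>n. 1 - pr n (Lset n (\<omega> n) (\<Gamma> n)))"
  define q where "q = (\<lambda>n. pr n {f. \<bar>real (chi (toE n f) {1..n}) - real (Lambda n (p n))\<bar> \<le> \<Gamma> n})"
  have hL: "(\<lambda>n. pr n (Lset n (\<omega> n) (\<Gamma> n))) \<longlonglongrightarrow> 1"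
    using whp_local unfolding pr_def gnp_Pn Lset_def measure_map_pmf vimage_Collect_eq .
  have d0: "\<delta> \<longlonglongrightarrow> 0"
    unfolding \<delta>_def using tendsto_diff[OF tendsto_const[of 1] hL] by simp
  have w1: "filterlim (\<lambda>n. \<omega> n - sqrt 2) at_top sequentially"
    using filterlim_tendsto_add_at_top[OF tendsto_const[of "- sqrt 2"] omega_inf] by simp
  have t1: "(\<lambda>n. inverse ((\<omega> n - sqrt 2)^2)) \<longlonglongrightarrow> 0"
    by (intro tendsto_inverse_0_at_top filterlim_pow_at_top w1) simp
  have t2: "(\<lambda>n. 4 * inverse ((\<omega> n)^2)) \<longlonglongrightarrow> 0"
    using tendsto_mult[OF tendsto_const[of 4] tendsto_inverse_0_at_top[OF filterlim_pow_at_top[OF _ omega_inf, of 2]]]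
    by simp
  define b where "b = (\<lambda>n. inverse ((\<omega> n - sqrt 2)^2) + \<delta> n + 4 * inverse ((\<omega> n)^2))"
  have b0: "b \<longlonglongrightarrow> 0" unfolding b_def using tendsto_add[OF tendsto_add[OF t1 d0] t2] by simp
  have e1: "eventually (\<lambda>n. \<omega> n > sqrt 2 + 1) sequentially"
    using omega_inf unfolding filterlim_at_top_dense by blast
  have e2: "eventually (\<lambda>n. 4 * inverse ((\<omega> n)^2) + \<delta> n < 1/2) sequentially"
    using order_tendstoD(2)[OF tendsto_add[OF t2 d0], of "1/2"] by simp
  have e3: "eventually (\<lambda>n. n > (0::nat)) sequentially" by (rule eventually_gt_at_top)
  have ev: "eventually (\<lambda>n. 1 - b n \<le> q n) sequentially"
    using e1 e2 e3
  proof eventually_elim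
    case (elim n)
    have w: "\<omega> n > sqrt 2" "\<omega> n > 0" using elim(1) real_sqrt_ge_zero[of 2] by linarith+
    have "- {f. \<bar>real (chi (toE n f) {1..n}) - real (Lambda n (p n))\<bar> \<le> \<Gamma> n} \<subseteq>
          {f. real (chi (toE n f) {1..n}) > real (Lambda n (p n)) + \<Gamma> n} \<union>
          {f. real (chi (toE n f) {1..n}) < real (Lambda n (p n)) - \<Gamma> n}"
    proof
      fix f assume "f \<in> - {f. \<bar>real (chi (toE n f) {1..n}) - real (Lambda n (p n))\<bar> \<le> \<Gamma> n}"
      hence "\<not> \<bar>real (chi (toE n f) {1..n}) - real (Lambda n (p n))\<bar> \<le> \<Gamma> n" by simp
      hence "real (chi (toE n f) {1..n}) > real (Lambda n (p n)) + \<Gamma> n \<or>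
             real (chi (toE n f) {1..n}) < real (Lambda n (p n)) - \<Gamma> n" by linarith
      thus "f \<in> {f. real (chi (toE n f) {1..n}) > real (Lambda n (p n)) + \<Gamma> n} \<union>
          {f. real (chi (toE n f) {1..n}) < real (Lambda n (p n)) - \<Gamma> n}" by blast
    qed
    hence i1: "pr n (- {f. \<bar>real (chi (toE n f) {1..n}) - real (Lambda n (p n))\<bar> \<le> \<Gamma> n}) \<le>
          pr n ({f. real (chi (toE n f) {1..n}) > real (Lambda n (p n)) + \<Gamma> n} \<union>
          {f. real (chi (toE n f) {1..n}) < real (Lambda n (p n)) - \<Gamma> n})" unfolding pr_def by (rule pr_mono)
    have i2: "pr n ({f. real (chi (toE n f) {1..n}) > real (Lambda n (p n)) + \<Gamma> n} \<union>
          {f. real (chi (toE n f) {1..n}) < real (Lambda n (p n)) - \<Gamma> n}) \<le> pr n {f. real (chi (toE n f) {1..n}) > real (Lambda n (p n)) + \<Gamma> n} +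
          pr n {f. real (chi (toE n f) {1..n}) < real (Lambda n (p n)) - \<Gamma> n}" unfolding pr_def by (rule pr_un)
    have i3: "pr n {f. real (chi (toE n f) {1..n}) > real (Lambda n (p n)) + \<Gamma> n}
       \<le> 1/(\<omega> n - sqrt 2)^2 + \<delta> n" unfolding pr_def \<delta>_def by (rule upper[OF elim(3) w(1)])
    have sm: "4/(\<omega> n)^2 + (1 - measure_pmf.prob (Pn n (p n)) (Lset n (\<omega> n) (\<Gamma> n))) < 1/2"
      using elim(2) unfolding \<delta>_def pr_def divide_inverse by linarith
    have i4: "pr n {f. real (chi (toE n f) {1..n}) < real (Lambda n (p n)) - \<Gamma> n} \<le> 4/(\<omega> n)^2"
      unfolding pr_def by (rule lower[OF elim(3) w(2) sm])
    have "pr n (- {f. \<bar>real (chi (toE n f) {1..n}) - real (Lambda n (p n))\<bar> \<le> \<Gamma> n})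
       \<le> 1/(\<omega> n - sqrt 2)^2 + \<delta> n + 4/(\<omega> n)^2" using i1 i2 i3 i4 by linarith
    hence "pr n (- {f. \<bar>real (chi (toE n f) {1..n}) - real (Lambda n (p n))\<bar> \<le> \<Gamma> n}) \<le> b n"
      unfolding b_def by (simp add: divide_inverse)
    moreover have "pr n (- {f. \<bar>real (chi (toE n f) {1..n}) - real (Lambda n (p n))\<bar> \<le> \<Gamma> n}) = 1 - q n"
      unfolding q_def pr_def by (rule pr_compl)
    ultimately show ?case by linarith
  qed
  have ev2: "eventually (\<lambda>n. q n \<le> 1) sequentially" by (simp add: q_def pr_def)
  have "(\<lambda>n. 1 - b n) \<longlonglongrightarrow> 1" using tendsto_diff[OF tendsto_const[of 1] b0] by simp
  hence "q \<longlonglongrightarrow> 1" by (rule tendsto_sandwich[OF ev ev2 _ tendsto_const])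
  thus ?thesis unfolding q_def pr_def gnp_Pn measure_map_pmf vimage_Collect_eq .
qed

end
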